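(* Let $\mathbb{X}$ be a real reflexive Banach space and $\mathbb{Y}$ a real normed space, $\epsilon\in[0,1)$, and $T,A\in\mathbb{K}(\mathbb{X},\mathbb{Y})$. Suppose $M_T=D\cup(-D)$, where $D$ is a nonempty compact connected subset of $S_{\mathbb{X}}$. Then $T\perp_B^{\epsilon}A$ if and only if there exists $x\in M_T$ such that $\|Tx+\lambda Ax\|^2\ge\|T\|^2-2\epsilon\|T\|\|\lambda A\|$ for all $\lambda\in\mathbb{R}$. Moreover, if in addition $M_T\subseteq M_A$, then $T\perp_B^{\epsilon}A$ if and only if there exists $x\in M_T$ with $Tx\perp_B^{\epsilon}Ax$.
   Context: $\mathbb{K}(\mathbb{X},\mathbb{Y})$ is the space of compact linear operators from $\mathbb{X}$ to $\mathbb{Y}$ with the operator norm. $S_{\mathbb{X}}$ is the unit sphere of $\mathbb{X}$; $M_T=\{x\in S_{\mathbb{X}}:\|Tx\|=\|T\|\}$. For $\epsilon\in[0,1)$ and $u,v$ in a normed space, $u\perp_B^{\epsilon}v$ means $\|u+\lambda v\|^2\ge\|u\|^2-2\epsilon\|u\|\|\lambda v\|$ for all $\lambda\in\mathbb{R}$. *)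

theory Defs
  imports "HOL-Analysis.Analysis"
begin

definition reflexive_space :: "'a::real_normed_vector itself \<Rightarrow> bool" where
  "reflexive_space _ \<longleftrightarrow>
     (\<forall>\<phi> :: ('a \<Rightarrow>\<^sub>L real) \<Rightarrow>\<^sub>L real. \<exists>x::'a.
        \<forall>f. blinfun_apply \<phi> f = blinfun_apply f x)"

definition compact_op :: "('a::real_normed_vector \<Rightarrow>\<^sub>L 'b::real_normed_vector) \<Rightarrow> bool" where
  "compact_op T \<longleftrightarrow> compact (closure (blinfun_apply T ` cball 0 1))"

definition norm_att :: "('a::real_normed_vector \<Rightarrow>\<^sub>L 'b::real_normed_vector) \<Rightarrow> 'a set" where
  "norm_att T = {x \<in> sphere 0 1. norm (blinfun_apply T x) = norm T}"

definition bj_eps_orth :: "real \<Rightarrow> 'a::real_normed_vector \<Rightarrow> 'a \<Rightarrow> bool" where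
  "bj_eps_orth \<epsilon> u v \<longleftrightarrow>
     (\<forall>t::real. (norm (u + t *\<^sub>R v))\<^sup>2 \<ge> (norm u)\<^sup>2 - 2 * \<epsilon> * norm u * norm (t *\<^sub>R v))"

end

theory Submission
imports Defs
begin

definition lin_graph :: "('v::real_normed_vector \<times> real) set \<Rightarrow> bool" where
  "lin_graph G \<longleftrightarrow> (\<forall>x r s. (x,r)\<in>G \<longrightarrow> (x,s)\<in>G \<longrightarrow> r = s)
     \<and> (\<forall>x r y s a. (x,r)\<in>G \<longrightarrow> (y,s)\<in>G \<longrightarrow> (a *\<^sub>R x + y, a*r+s)\<in>G)
     \<and> (\<forall>x r. (x,r)\<in>G \<longrightarrow> r \<le> norm x)"

lemma hb_extend:
  fixes M :: "('v::real_normed_vector \<times> real) set"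
  assumes L: "lin_graph M" and w: "(w, norm w) \<in> M" and u: "\<forall>r. (u,r) \<notin> M"
  shows "\<exists>M'. lin_graph M' \<and> M \<subseteq> M' \<and> M' \<noteq> M"
proof -
  have fnc: "\<And>x r s. (x,r)\<in>M \<Longrightarrow> (x,s)\<in>M \<Longrightarrow> r=s"
    and cl: "\<And>x r y s a. (x,r)\<in>M \<Longrightarrow> (y,s)\<in>M \<Longrightarrow> (a *\<^sub>R x + y, a*r+s)\<in>M"
    and dom: "\<And>x r. (x,r)\<in>M \<Longrightarrow> r \<le> norm x"
    using L unfolding lin_graph_def by blast+
  have z: "(0,0) \<in> M" using cl[OF w w, of "-1"] by simp
  have sc: "(a *\<^sub>R x, a*r)\<in>M" if "(x,r)\<in>M" for x r a using cl[OF that z, of a] by simp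
  have key: "r - norm (x - u) \<le> norm (y + u) - s" if "(x,r)\<in>M" "(y,s)\<in>M" for x r y s
  proof -
    have "(x+y, r+s) \<in> M" using cl[OF that, of 1] by simp
    hence "r + s \<le> norm (x+y)" by (rule dom)
    also have "norm (x+y) \<le> norm (x-u) + norm (y+u)" using norm_triangle_ineq[of "x-u" "y+u"] by simp
    finally show ?thesis by simp
  qed
  define S where "S = {r - norm (x - u) | x r. (x,r)\<in>M}"
  define c where "c = Sup S"
  have S_ne: "S \<noteq> {}" using z unfolding S_def by blast
  have bdd: "bdd_above S" unfolding S_def
    by (rule bdd_aboveI[where M="norm u"]) (use key[OF _ z] in auto)
  have c_ge: "r - norm (x-u) \<le> c" if "(x,r)\<in>M" for x r
    unfolding c_def by (rule cSup_upper[OF _ bdd]) (use that S_def in blast)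
  have c_le: "c \<le> norm (y+u) - s" if "(y,s)\<in>M" for y s
    unfolding c_def by (rule cSup_least[OF S_ne]) (auto simp: S_def intro: key[OF _ that])
  define M' where "M' = {(x + a *\<^sub>R u, r + a*c) | x r a. (x,r)\<in>M}"
  have uM: "(u, c) \<in> M'" unfolding M'_def using z by force
  show ?thesis
  proof (intro exI conjI)
    show "M \<subseteq> M'" unfolding M'_def by force
    show "M' \<noteq> M" using uM u by blast
    have f': "r1 = r2" if p1: "(v,r1)\<in>M'" and p2: "(v,r2)\<in>M'" for v r1 r2
    proof -
      obtain x r a where 1: "v = x + a *\<^sub>R u" "r1 = r + a*c" "(x,r)\<in>M" using p1 unfolding M'_def by blast
      obtain x' r' a' where 2: "v = x' + a' *\<^sub>R u" "r2 = r' + a'*c" "(x',r')\<in>M" using p2 unfolding M'_def by blast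
      have d: "(x' - x, r' - r) \<in> M" using cl[OF 1(3) 2(3), of "-1"] by simp
      have "a = a'"
      proof (rule ccontr)
        assume "a \<noteq> a'"
        have "(a - a') *\<^sub>R u = x' - x" using 1(1) 2(1) by (simp add: algebra_simps)
        hence "u = inverse (a - a') *\<^sub>R (x' - x)" proof -
          have "a - a' \<noteq> 0" using \<open>a \<noteq> a'\<close> by simp
          hence "inverse (a - a') *\<^sub>R ((a - a') *\<^sub>R u) = u" by simp
          thus ?thesis using \<open>(a - a') *\<^sub>R u = x' - x\<close> by simp
        qed
        thus False using sc[OF d, of "inverse (a - a')"] u by metis
      qed
      hence "x = x'" using 1(1) 2(1) by simp
      hence "r = r'" using fnc 1(3) 2(3) by blast
      thus ?thesis using 1 2 \<open>a = a'\<close> by simp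
    qed
    have cl': "(b *\<^sub>R v1 + v2, b*r1 + r2) \<in> M'" if p1: "(v1,r1)\<in>M'" and p2: "(v2,r2)\<in>M'" for v1 r1 v2 r2 b
    proof -
      obtain x r a where 1: "v1 = x + a *\<^sub>R u" "r1 = r + a*c" "(x,r)\<in>M" using p1 unfolding M'_def by blast
      obtain x' r' a' where 2: "v2 = x' + a' *\<^sub>R u" "r2 = r' + a'*c" "(x',r')\<in>M" using p2 unfolding M'_def by blast
      have "(b *\<^sub>R x + x', b*r + r') \<in> M" using cl[OF 1(3) 2(3)] .
      moreover have "b *\<^sub>R v1 + v2 = (b *\<^sub>R x + x') + (b*a + a') *\<^sub>R u"
        using 1 2 by (simp add: algebra_simps)
      moreover have "b*r1 + r2 = (b*r + r') + (b*a+a')*c" using 1 2 by (simp add: algebra_simps)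
      ultimately show ?thesis unfolding M'_def by blast
    qed
    have dom': "r1 \<le> norm v" if p1: "(v,r1)\<in>M'" for v r1
    proof -
      obtain x r a where 1: "v = x + a *\<^sub>R u" "r1 = r + a*c" "(x,r)\<in>M" using p1 unfolding M'_def by blast
      consider "a = 0" | "a > 0" | "a < 0" by linarith
      thus ?thesis
      proof cases
        case 1 thus ?thesis using \<open>r1 = r + a*c\<close> \<open>v = x + a *\<^sub>R u\<close> dom[OF \<open>(x,r)\<in>M\<close>] by simp
      next
        case 2
        have "c \<le> norm (inverse a *\<^sub>R x + u) - inverse a * r" using c_le[OF sc[OF 1(3)]] .
        hence "a * c \<le> a * (norm (inverse a *\<^sub>R x + u) - inverse a * r)" using 2
          by (intro mult_left_mono) auto
        also have "\<dots> = a * norm (inverse a *\<^sub>R x + u) - r" using 2 by (simp add: right_diff_distrib)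
        also have "a * norm (inverse a *\<^sub>R x + u) = norm (a *\<^sub>R (inverse a *\<^sub>R x + u))" using 2 by simp
        also have "a *\<^sub>R (inverse a *\<^sub>R x + u) = x + a *\<^sub>R u" using 2 by (simp add: algebra_simps)
        finally show ?thesis using 1 by simp
      next
        case 3
        define b where "b = - a"
        have b: "b > 0" using 3 b_def by simp
        have "inverse b * r - norm (inverse b *\<^sub>R x - u) \<le> c" using c_ge[OF sc[OF 1(3)]] .
        hence "b * (inverse b * r - norm (inverse b *\<^sub>R x - u)) \<le> b * c" using b
          by (intro mult_left_mono) auto
        hence "r - b * norm (inverse b *\<^sub>R x - u) \<le> b * c" using b
          by (simp add: right_diff_distrib mult.assoc[symmetric])
        moreover have e1: "b *\<^sub>R (inverse b *\<^sub>R x - u) = x + a *\<^sub>R u" using b by (simp add: algebra_simps b_def)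
        moreover have "b * norm (inverse b *\<^sub>R x - u) = norm (x + a *\<^sub>R u)"
          using b e1 by (metis abs_of_pos norm_scaleR)
        ultimately show ?thesis using 1(1,2) b_def by (simp add: algebra_simps)
      qed
    qed
    show "lin_graph M'" unfolding lin_graph_def using f' cl' dom' by blast
  qed
qed

lemma hahn_banach_norm:
  fixes w :: "'v::real_normed_vector"
  shows "\<exists>g. bounded_linear g \<and> (\<forall>v. \<bar>g v\<bar> \<le> norm v) \<and> g w = norm w"
proof -
  define AA where "AA = {G::('v \<times> real) set. lin_graph G \<and> (w, norm w) \<in> G}"
  define G0 where "G0 = {(a *\<^sub>R w, a * norm w) | a. True}"
  have G0: "G0 \<in> AA"
  proof -
    have f: "r = s" if q: "(x,r)\<in>G0" "(x,s)\<in>G0" for x r s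
    proof -
      obtain a b where ab: "x = a *\<^sub>R w" "r = a * norm w" "x = b *\<^sub>R w" "s = b * norm w"
        using q unfolding G0_def by blast
      show ?thesis
      proof (cases "w = 0")
        case True thus ?thesis using ab by simp
      next
        case False
        hence "a = b" using ab by (metis scaleR_cancel_right)
        thus ?thesis using ab by simp
      qed
    qed
    have c: "(b *\<^sub>R x + y, b*r+s)\<in>G0" if q: "(x,r)\<in>G0" "(y,s)\<in>G0" for x r y s b
    proof -
      obtain a a' where ab: "x = a *\<^sub>R w" "r = a * norm w" "y = a' *\<^sub>R w" "s = a' * norm w"
        using q unfolding G0_def by blast
      have "b *\<^sub>R x + y = (b*a + a') *\<^sub>R w" "b*r+s = (b*a+a') * norm w" using ab by (simp_all add: algebra_simps)
      thus ?thesis unfolding G0_def by blast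
    qed
    have d: "r \<le> norm x" if "(x,r)\<in>G0" for x r
      using that unfolding G0_def by (auto simp: mult_right_mono)
    have "(w, norm w) \<in> G0" unfolding G0_def by (rule CollectI, rule exI[of _ 1]) simp
    thus ?thesis unfolding AA_def lin_graph_def using f c d by blast
  qed
  have "\<exists>M\<in>AA. \<forall>X\<in>AA. M \<subseteq> X \<longrightarrow> X = M"
  proof (rule Zorn_Lemma2, intro ballI)
    fix C assume C: "C \<in> chains AA"
    hence CA: "C \<subseteq> AA" and ch: "\<And>X Y. X \<in> C \<Longrightarrow> Y \<in> C \<Longrightarrow> X \<subseteq> Y \<or> Y \<subseteq> X"
      unfolding chains_def chain_subset_def by blast+
    show "\<exists>U\<in>AA. \<forall>X\<in>C. X \<subseteq> U"
    proof (cases "C = {}")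
      case True thus ?thesis using G0 by blast
    next
      case False
      have L: "lin_graph X" and wX: "(w, norm w) \<in> X" if "X \<in> C" for X using CA that unfolding AA_def by blast+
      have "lin_graph (\<Union>C)"
        unfolding lin_graph_def
      proof (intro conjI allI impI)
        fix x r s assume "(x, r) \<in> \<Union>C" "(x, s) \<in> \<Union>C"
        then obtain X Y where "X\<in>C" "Y\<in>C" "(x,r)\<in>X" "(x,s)\<in>Y" by blast
        thus "r = s" using ch[of X Y] L unfolding lin_graph_def by blast
      next
        fix x r y s a assume "(x, r) \<in> \<Union>C" "(y, s) \<in> \<Union>C"
        then obtain X Y where XY: "X\<in>C" "Y\<in>C" "(x,r)\<in>X" "(y,s)\<in>Y" by blast
        show "(a *\<^sub>R x + y, a * r + s) \<in> \<Union> C"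
        proof (cases "X \<subseteq> Y")
          case True
          hence "(a *\<^sub>R x + y, a * r + s) \<in> Y" using L[OF XY(2)] XY unfolding lin_graph_def by blast
          thus ?thesis using XY by blast
        next
          case False
          hence "Y \<subseteq> X" using ch XY by blast
          hence "(a *\<^sub>R x + y, a * r + s) \<in> X" using L[OF XY(1)] XY unfolding lin_graph_def by blast
          thus ?thesis using XY by blast
        qed
      next
        fix x r assume "(x, r) \<in> \<Union>C"
        then obtain X where "X\<in>C" "(x,r)\<in>X" by blast
        thus "r \<le> norm x" using L unfolding lin_graph_def by blast
      qed
      moreover have "(w, norm w) \<in> \<Union>C" using False wX by blast
      ultimately show ?thesis unfolding AA_def by blast
    qed
  qed
  then obtain M where MA: "M \<in> AA" and mx: "\<And>X. X \<in> AA \<Longrightarrow> M \<subseteq> X \<Longrightarrow> X = M" by blast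
  have L: "lin_graph M" and wM: "(w, norm w) \<in> M" using MA unfolding AA_def by blast+
  have tot: "\<exists>r. (u,r) \<in> M" for u
  proof (rule ccontr)
    assume "\<not> (\<exists>r. (u,r) \<in> M)"
    then obtain M' where "lin_graph M'" "M \<subseteq> M'" "M' \<noteq> M" using hb_extend[OF L wM] by blast
    moreover hence "M' \<in> AA" using wM unfolding AA_def by blast
    ultimately show False using mx by blast
  qed
  have fnc: "\<And>x r s. (x,r)\<in>M \<Longrightarrow> (x,s)\<in>M \<Longrightarrow> r=s"
    and cl: "\<And>x r y s a. (x,r)\<in>M \<Longrightarrow> (y,s)\<in>M \<Longrightarrow> (a *\<^sub>R x + y, a*r+s)\<in>M"
    and dom: "\<And>x r. (x,r)\<in>M \<Longrightarrow> r \<le> norm x"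
    using L unfolding lin_graph_def by blast+
  define g where "g v = (THE r. (v,r) \<in> M)" for v
  have gM: "(v, g v) \<in> M" for v
    unfolding g_def using tot[of v] fnc by (metis theI)
  have gval: "g v = r" if "(v,r)\<in>M" for v r using fnc[OF gM that] .
  have glin: "g (a *\<^sub>R x + y) = a * g x + g y" for a x y using gval[OF cl[OF gM gM]] .
  have z: "g 0 = 0" using glin[of 1 0 0] by simp
  have gadd: "g (x + y) = g x + g y" for x y using glin[of 1 x y] by simp
  have gsc: "g (a *\<^sub>R x) = a * g x" for a x using glin[of a x 0] z by simp
  have gle: "g v \<le> norm v" for v using dom[OF gM] .
  have gabs: "\<bar>g v\<bar> \<le> norm v" for v
    using gle[of v] gle[of "-v"] gsc[of "-1" v] by simp
  have "bounded_linear g"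
    by (rule bounded_linear_intro[where K=1]) (use gadd gsc gabs in auto)
  moreover have "g w = norm w" using gval[OF wM] .
  ultimately show ?thesis using gabs by blast
qed

lemma cluster_closed:
  fixes F :: "'c::topological_space filter"
  assumes "inf (nhds a) F \<noteq> bot" "closed S" "eventually (\<lambda>q. q \<in> S) F"
  shows "a \<in> S"
proof (rule ccontr)
  assume "a \<notin> S"
  hence "eventually (\<lambda>q. q \<in> -S) (nhds a)" using assms(2) by (intro eventually_nhds_in_open) auto
  hence "eventually (\<lambda>q. False) (inf (nhds a) F)" using assms(3) unfolding eventually_inf by blast
  thus False using assms(1) by (simp add: eventually_False)
qed

lemma blinfun_approx:
  fixes B :: "'a::real_normed_vector \<Rightarrow>\<^sub>L 'b::real_normed_vector"
  assumes e: "e > 0"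
  shows "\<exists>x. norm x \<le> 1 \<and> norm (blinfun_apply B x) > norm B - e"
proof (rule ccontr)
  assume H: "\<not> ?thesis"
  hence h: "norm (blinfun_apply B x) \<le> norm B - e" if "norm x \<le> 1" for x using that by force
  have nn: "0 \<le> norm B - e" using h[of 0] by simp
  have "norm (blinfun_apply B x) \<le> (norm B - e) * norm x" for x
  proof (cases "x = 0")
    case True thus ?thesis by simp
  next
    case False
    hence nx: "norm x > 0" by simp
    have "norm (blinfun_apply B (inverse (norm x) *\<^sub>R x)) \<le> norm B - e" using h False by simp
    hence "inverse (norm x) * norm (blinfun_apply B x) \<le> norm B - e" by (simp add: blinfun.scaleR_right)
    hence "norm x * (inverse (norm x) * norm (blinfun_apply B x)) \<le> norm x * (norm B - e)"
      using nx by (intro mult_left_mono) auto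
    moreover have "norm x * (inverse (norm x) * norm (blinfun_apply B x)) = norm (blinfun_apply B x)"
      using nx by simp
    ultimately show ?thesis by (simp add: mult.commute)
  qed
  hence "norm B \<le> norm B - e" by (rule norm_blinfun_bound[OF nn])
  thus False using e by simp
qed

lemma weak_cluster:
  fixes T A :: "'a::banach \<Rightarrow>\<^sub>L 'b::real_normed_vector" and xs :: "nat \<Rightarrow> 'a"
  assumes refl: "reflexive_space TYPE('a)" and cT: "compact_op T" and cA: "compact_op A"
    and xs: "\<And>n. norm (xs n) \<le> 1"
  shows "\<exists>x. norm x \<le> 1 \<and> (\<forall>S. closed S \<longrightarrow>
           eventually (\<lambda>n. (blinfun_apply T (xs n), blinfun_apply A (xs n)) \<in> S) sequentially
           \<longrightarrow> (blinfun_apply T x, blinfun_apply A x) \<in> S)"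
proof -
  define K :: "(('a \<Rightarrow>\<^sub>L real) \<Rightarrow> real) set" where "K = PiE UNIV (\<lambda>f. {- norm f .. norm f})"
  have cK: "compact K" unfolding K_def
    using compactin_PiE[of "\<lambda>f. euclidean" UNIV "\<lambda>f::'a \<Rightarrow>\<^sub>L real. {-norm f..norm f}"]
    by (simp add: euclidean_product_topology)
  define KT where "KT = closure (blinfun_apply T ` cball 0 1)"
  define KA where "KA = closure (blinfun_apply A ` cball 0 1)"
  have cU: "compact (K \<times> KT \<times> KA)" using cK cT cA unfolding compact_op_def KT_def KA_def
    by (intro compact_Times)
  define Q where "Q n = ((\<lambda>f::'a \<Rightarrow>\<^sub>L real. blinfun_apply f (xs n)), blinfun_apply T (xs n), blinfun_apply A (xs n))" for n
  have QU: "Q n \<in> K \<times> KT \<times> KA" for n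
  proof -
    have "\<bar>blinfun_apply f (xs n)\<bar> \<le> norm f" for f :: "'a \<Rightarrow>\<^sub>L real"
    proof -
      have "\<bar>blinfun_apply f (xs n)\<bar> \<le> norm f * norm (xs n)" using norm_blinfun[of f "xs n"] by simp
      also have "\<dots> \<le> norm f * 1" using xs[of n] by (intro mult_left_mono) auto
      finally show ?thesis by simp
    qed
    hence "(\<lambda>f. blinfun_apply f (xs n)) \<in> K" unfolding K_def by (force simp: abs_le_iff)
    moreover have "blinfun_apply T (xs n) \<in> KT" unfolding KT_def
      using xs[of n] by (intro closure_subset[THEN subsetD]) auto
    moreover have "blinfun_apply A (xs n) \<in> KA" unfolding KA_def
      using xs[of n] by (intro closure_subset[THEN subsetD]) auto
    ultimately show ?thesis unfolding Q_def by simp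
  qed
  define F where "F = filtermap Q sequentially"
  have Fnb: "F \<noteq> bot" by (simp add: F_def filtermap_bot_iff)
  have "eventually (\<lambda>q. q \<in> K \<times> KT \<times> KA) F" unfolding F_def eventually_filtermap using QU by simp
  then obtain a where aU: "a \<in> K \<times> KT \<times> KA" and cla: "inf (nhds a) F \<noteq> bot"
    using cU Fnb unfolding compact_filter by blast
  obtain p y z where a: "a = (p,y,z)" by (cases a) auto
  have CL: "a \<in> S" if "closed S" "eventually (\<lambda>n. Q n \<in> S) sequentially" for S
    using cluster_closed[OF cla that(1)] that(2) unfolding F_def eventually_filtermap by blast
  have contp: "continuous_on UNIV (\<lambda>q::(('a\<Rightarrow>\<^sub>L real)\<Rightarrow>real) \<times> 'b \<times> 'b. fst q f)" for f
    by (rule continuous_on_product_then_coordinatewise) (intro continuous_intros)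
  have padd: "p (f + g) = p f + p g" for f g
  proof -
    have "a \<in> {q. fst q (f+g) = fst q f + fst q g}"
      by (rule CL, rule closed_Collect_eq) (auto intro!: continuous_intros contp simp: Q_def blinfun.add_left)
    thus ?thesis using a by simp
  qed
  have psc: "p (r *\<^sub>R f) = r * p f" for r f
  proof -
    have "a \<in> {q. fst q (r *\<^sub>R f) = r * fst q f}"
      by (rule CL, rule closed_Collect_eq) (auto intro!: continuous_intros contp simp: Q_def blinfun.scaleR_left)
    thus ?thesis using a by simp
  qed
  have pb: "\<bar>p f\<bar> \<le> norm f" for f
  proof -
    have "p f \<in> {- norm f..norm f}" using aU a unfolding K_def by (auto simp: PiE_iff)
    thus ?thesis by (simp add: abs_le_iff)
  qed
  have blp: "bounded_linear p"
    by (rule bounded_linear_intro[where K=1]) (use padd psc pb in auto)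
  obtain x where px: "\<And>f. p f = blinfun_apply f x"
    using refl unfolding reflexive_space_def
    by (metis bounded_linear_Blinfun_apply[OF blp])
  have nx: "norm x \<le> 1"
  proof -
    obtain g where g: "bounded_linear g" "\<And>v. \<bar>g v\<bar> \<le> norm v" "g x = norm x"
      using hahn_banach_norm[of x] by blast
    define f where "f = Blinfun g"
    have fa: "blinfun_apply f = g" unfolding f_def using g(1) by (simp add: bounded_linear_Blinfun_apply)
    have "a \<in> {q. fst q f \<le> 1}"
    proof (rule CL, rule closed_Collect_le)
      show "continuous_on UNIV (\<lambda>q::(('a\<Rightarrow>\<^sub>L real)\<Rightarrow>real) \<times> 'b \<times> 'b. fst q f)" by (rule contp)
      have "g (xs n) \<le> 1" for n using g(2)[of "xs n"] xs[of n] by linarith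
      thus "eventually (\<lambda>n. Q n \<in> {q. fst q f \<le> 1}) sequentially" by (simp add: Q_def fa)
    qed simp
    hence "p f \<le> 1" using a by simp
    thus ?thesis using px[of f] fa g(3) by simp
  qed
  have sep: "blinfun_apply B x = u"
    if B: "compact_op B" and ev: "\<And>n. h (Q n) = blinfun_apply B (xs n)" and hu: "h a = u"
      and hc: "continuous_on UNIV h" for B :: "'a \<Rightarrow>\<^sub>L 'b" and h u
  proof -
    obtain g where g: "bounded_linear g" "\<And>v. \<bar>g v\<bar> \<le> norm v" "g (blinfun_apply B x - u) = norm (blinfun_apply B x - u)"
      using hahn_banach_norm[of "blinfun_apply B x - u"] by blast
    have blc: "bounded_linear (\<lambda>v. g (blinfun_apply B v))"
      using g(1) by (intro bounded_linear_compose[OF g(1)]) (rule blinfun.bounded_linear_right)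
    define f where "f = Blinfun (\<lambda>v. g (blinfun_apply B v))"
    have fa: "blinfun_apply f = (\<lambda>v. g (blinfun_apply B v))" unfolding f_def using blc
      by (simp add: bounded_linear_Blinfun_apply)
    have "a \<in> {q. fst q f = g (h q)}"
    proof (rule CL, rule closed_Collect_eq)
      show "continuous_on UNIV (\<lambda>q::(('a\<Rightarrow>\<^sub>L real)\<Rightarrow>real) \<times> 'b \<times> 'b. fst q f)" by (rule contp)
      show "continuous_on UNIV (\<lambda>q. g (h q))" by (rule bounded_linear.continuous_on[OF g(1) hc])
      show "eventually (\<lambda>n. Q n \<in> {q. fst q f = g (h q)}) sequentially"
        by (simp add: Q_def fa ev[unfolded Q_def])
    qed
    hence "p f = g u" using a hu by simp
    hence "g (blinfun_apply B x) = g u" using px[of f] fa by simp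
    hence "g (blinfun_apply B x - u) = 0" using linear_diff[OF bounded_linear.linear[OF g(1)]] by simp
    thus ?thesis using g(3) by simp
  qed
  have Ty: "blinfun_apply T x = y"
    by (rule sep[OF cT, of "\<lambda>q. fst (snd q)"]) (auto simp: Q_def a intro!: continuous_intros)
  have Az: "blinfun_apply A x = z"
    by (rule sep[OF cA, of "\<lambda>q. snd (snd q)"]) (auto simp: Q_def a intro!: continuous_intros)
  have "(blinfun_apply T x, blinfun_apply A x) \<in> S"
    if "closed S" "eventually (\<lambda>n. (blinfun_apply T (xs n), blinfun_apply A (xs n)) \<in> S) sequentially" for S
  proof -
    have "a \<in> UNIV \<times> S" by (rule CL) (use that in \<open>auto simp: Q_def intro: closed_Times\<close>)
    thus ?thesis using a Ty Az by simp
  qed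
  thus ?thesis using nx by blast
qed

lemma convex_step:
  fixes u v :: "'v::real_normed_vector"
  assumes r: "0 < r" "r \<le> s"
  shows "norm (u + r *\<^sub>R v) \<le> (1 - r/s) * norm u + (r/s) * norm (u + s *\<^sub>R v)"
proof -
  have s: "s > 0" using r by simp
  have e: "u + r *\<^sub>R v = (1 - r/s) *\<^sub>R u + (r/s) *\<^sub>R (u + s *\<^sub>R v)"
    using s by (simp add: algebra_simps)
  have "norm (u + r *\<^sub>R v) \<le> norm ((1 - r/s) *\<^sub>R u) + norm ((r/s) *\<^sub>R (u + s *\<^sub>R v))"
    unfolding e by (rule norm_triangle_ineq)
  also have "\<dots> = (1 - r/s) * norm u + (r/s) * norm (u + s *\<^sub>R v)"
    using r s by simp
  finally show ?thesis .
qed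

lemma sq_to_lin:
  fixes T A :: "'a::real_normed_vector \<Rightarrow>\<^sub>L 'b::real_normed_vector"
  assumes N: "norm T > 0" and c: "c \<ge> 0"
    and H: "\<And>t. t > 0 \<Longrightarrow> (norm (T + t *\<^sub>R A))\<^sup>2 \<ge> (norm T)\<^sup>2 - 2 * norm T * c * t"
    and t: "t > 0"
  shows "norm (T + t *\<^sub>R A) \<ge> norm T - c * t"
proof (rule ccontr)
  define L where "L t = norm (T + t *\<^sub>R A)" for t
  define N where "N = norm T"
  assume "\<not> ?thesis"
  hence lt: "L t < N - c * t" unfolding L_def N_def by simp
  define \<eta> where "\<eta> = (N - c * t - L t) / t"
  have eta: "\<eta> > 0" unfolding \<eta>_def using lt t by simp
  define k where "k = c + \<eta>"
  have k: "k > 0" using c eta k_def by simp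
  have Np: "N > 0" using N N_def by simp
  define t1 where "t1 = min t (N * \<eta> / k\<^sup>2)"
  have t1p: "t1 > 0" unfolding t1_def using t Np eta k by simp
  have t1t: "t1 \<le> t" unfolding t1_def by simp
  have t1b: "t1 * k\<^sup>2 \<le> N * \<eta>" unfolding t1_def using k
    by (metis min.cobounded2 mult.commute pos_le_divide_eq zero_less_power)
  have kk: "(N - L t) / t = k" unfolding k_def \<eta>_def using t by (simp add: field_simps)
  have "L t1 \<le> (1 - t1/t) * N + (t1/t) * L t"
    unfolding L_def N_def using convex_step[OF t1p t1t, of T A] by simp
  also have "\<dots> = N - t1 * ((N - L t) / t)" using t by (simp add: field_simps)
  finally have Lle: "L t1 \<le> N - t1 * k" unfolding kk .
  have "t1 * k \<le> N"
  proof -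
    have "t1 * k * k \<le> N * \<eta>" using t1b by (simp add: power2_eq_square mult.assoc)
    also have "\<dots> \<le> N * k" using Np k_def c by (intro mult_left_mono) auto
    finally show ?thesis using k by simp
  qed
  hence "(L t1)\<^sup>2 \<le> (N - t1 * k)\<^sup>2" using Lle by (intro power_mono) (auto simp: L_def)
  moreover have "(L t1)\<^sup>2 \<ge> N\<^sup>2 - 2 * N * c * t1" using H[OF t1p] unfolding L_def N_def by simp
  ultimately have "N\<^sup>2 - 2 * N * c * t1 \<le> (N - t1 * k)\<^sup>2" by linarith
  hence "2 * N * \<eta> * t1 \<le> t1 * (t1 * k\<^sup>2)" unfolding k_def by (simp add: power2_eq_square algebra_simps)
  hence "2 * N * \<eta> \<le> t1 * k\<^sup>2" using t1p by (simp add: mult.commute)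
  moreover have "N * \<eta> > 0" using Np eta by simp
  moreover have "2 * N * \<eta> = 2 * (N * \<eta>)" by simp
  ultimately show False using t1b by linarith
qed

lemma KL:
  fixes T A :: "'a::banach \<Rightarrow>\<^sub>L 'b::real_normed_vector"
  assumes refl: "reflexive_space TYPE('a)" and cT: "compact_op T" and cA: "compact_op A"
    and Npos: "norm T > 0" and c: "c \<ge> 0"
    and bd: "\<And>t. t > 0 \<Longrightarrow> norm (T + t *\<^sub>R A) \<ge> norm T - c * t"
  shows "\<exists>x. norm x = 1 \<and> norm (blinfun_apply T x) = norm T \<and>
            (\<forall>s>0. norm (blinfun_apply T x + s *\<^sub>R blinfun_apply A x) \<ge> norm T - c * s)"
proof -
  define N where "N = norm T"
  define t where "t n = inverse (real (Suc n))" for n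
  have tpos: "t n > 0" for n unfolding t_def by simp
  have tle1: "t n \<le> 1" for n unfolding t_def by (simp add: inverse_le_1_iff)
  have tev: "eventually (\<lambda>n. t n < \<eta>) sequentially" if eta: "\<eta> > 0" for \<eta>
  proof -
    obtain n0 where n0: "inverse (real (Suc n0)) < \<eta>" using reals_Archimedean[OF eta] by blast
    have "t n < \<eta>" if "n \<ge> n0" for n
    proof -
      have "t n \<le> t n0" unfolding t_def using that by (simp add: le_imp_inverse_le)
      thus ?thesis using n0 unfolding t_def by linarith
    qed
    thus ?thesis unfolding eventually_sequentially by blast
  qed
  have "\<forall>n. \<exists>x. norm x \<le> 1 \<and> norm (blinfun_apply (T + t n *\<^sub>R A) x) > norm (T + t n *\<^sub>R A) - (t n)\<^sup>2"
  proof
    fix n show "\<exists>x. norm x \<le> 1 \<and> norm (blinfun_apply (T + t n *\<^sub>R A) x) > norm (T + t n *\<^sub>R A) - (t n)\<^sup>2"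
      using blinfun_approx[of "(t n)\<^sup>2" "T + t n *\<^sub>R A"] tpos[of n] by simp
  qed
  hence "\<exists>xs. \<forall>n. norm (xs n) \<le> 1 \<and> norm (blinfun_apply (T + t n *\<^sub>R A) (xs n)) > norm (T + t n *\<^sub>R A) - (t n)\<^sup>2"
    by (rule choice)
  then obtain xs where xsb: "\<forall>n. norm (xs n) \<le> 1 \<and> norm (blinfun_apply (T + t n *\<^sub>R A) (xs n)) > norm (T + t n *\<^sub>R A) - (t n)\<^sup>2"
    by blast
  have xs1: "\<And>n. norm (xs n) \<le> 1" using xsb by blast
  have xs2: "\<And>n. norm (blinfun_apply (T + t n *\<^sub>R A) (xs n)) > norm (T + t n *\<^sub>R A) - (t n)\<^sup>2"
    using xsb by blast
  have low: "norm (blinfun_apply T (xs n) + t n *\<^sub>R blinfun_apply A (xs n)) \<ge> N - c * t n - (t n)\<^sup>2" for n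
    using xs2[of n] bd[OF tpos[of n]] unfolding N_def by (simp add: blinfun.add_left blinfun.scaleR_left)
  have TN: "norm (blinfun_apply T (xs n)) \<le> N" for n
  proof -
    have "norm (blinfun_apply T (xs n)) \<le> norm T * norm (xs n)" by (rule norm_blinfun)
    also have "\<dots> \<le> norm T * 1" using xs1[of n] by (intro mult_left_mono) auto
    finally show ?thesis unfolding N_def by simp
  qed
  have AN: "norm (blinfun_apply A (xs n)) \<le> norm A" for n
  proof -
    have "norm (blinfun_apply A (xs n)) \<le> norm A * norm (xs n)" by (rule norm_blinfun)
    also have "\<dots> \<le> norm A * 1" using xs1[of n] by (intro mult_left_mono) auto
    finally show ?thesis by simp
  qed
  obtain x where nx: "norm x \<le> 1" and PS0: "\<forall>S. closed S \<longrightarrow>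
           eventually (\<lambda>n. (blinfun_apply T (xs n), blinfun_apply A (xs n)) \<in> S) sequentially
           \<longrightarrow> (blinfun_apply T x, blinfun_apply A x) \<in> S"
    using weak_cluster[OF refl cT cA, where xs=xs, OF xs1] by (elim exE conjE)
  have PS: "\<And>S. closed S \<Longrightarrow>
           eventually (\<lambda>n. (blinfun_apply T (xs n), blinfun_apply A (xs n)) \<in> S) sequentially
           \<Longrightarrow> (blinfun_apply T x, blinfun_apply A x) \<in> S" using PS0 by simp
  have C1: "norm (blinfun_apply T x) \<ge> N - \<delta>" if d: "\<delta> > 0" for \<delta>
  proof -
    define K where "K = c + 1 + norm A"
    have K: "K > 0" unfolding K_def using c norm_ge_zero[of A] by linarith
    have "(blinfun_apply T x, blinfun_apply A x) \<in> {q. N - \<delta> \<le> norm (fst q)}"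
    proof (rule PS)
      show "closed {q::'b\<times>'b. N - \<delta> \<le> norm (fst q)}"
        by (rule closed_Collect_le) (auto intro!: continuous_intros)
      have "N - \<delta> \<le> norm (blinfun_apply T (xs n))" if tn: "t n < \<delta> / K" for n
      proof -
        have "norm (blinfun_apply T (xs n) + t n *\<^sub>R blinfun_apply A (xs n))
              \<le> norm (blinfun_apply T (xs n)) + t n * norm (blinfun_apply A (xs n))"
          using norm_triangle_ineq[of "blinfun_apply T (xs n)" "t n *\<^sub>R blinfun_apply A (xs n)"] tpos[of n] by simp
        moreover have "t n * norm (blinfun_apply A (xs n)) \<le> t n * norm A"
          using AN[of n] tpos[of n] by (intro mult_left_mono) auto
        moreover have "(t n)\<^sup>2 \<le> t n" using tle1[of n] tpos[of n] by (simp add: power2_eq_square mult_left_le)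
        moreover have "t n * K < \<delta>" using tn K by (simp add: pos_less_divide_eq)
        moreover have "t n * K = c * t n + t n + t n * norm A" unfolding K_def by (simp add: algebra_simps)
        ultimately show ?thesis using low[of n] by linarith
      qed
      thus "eventually (\<lambda>n. (blinfun_apply T (xs n), blinfun_apply A (xs n)) \<in> {q. N - \<delta> \<le> norm (fst q)}) sequentially"
        using tev[of "\<delta> / K"] d K by (auto elim: eventually_mono)
    qed
    thus ?thesis by simp
  qed
  have TxN: "norm (blinfun_apply T x) \<ge> N"
    using C1 by (metis diff_le_eq field_le_epsilon add.commute)
  have TxN2: "norm (blinfun_apply T x) \<le> N * norm x" unfolding N_def by (rule norm_blinfun)
  have Np: "N > 0" using Npos N_def by simp
  have nx1: "norm x = 1"
  proof -
    have "N * 1 \<le> N * norm x" using TxN TxN2 by simp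
    hence "1 \<le> norm x" using Np by (simp add: mult_le_cancel_left_pos)
    thus ?thesis using nx by simp
  qed
  have Tx: "norm (blinfun_apply T x) = N" using TxN TxN2 nx1 by simp
  have C2: "norm (blinfun_apply T x + s *\<^sub>R blinfun_apply A x) \<ge> N - c * s - \<delta>"
    if s: "s > 0" and d: "\<delta> > 0" for s \<delta>
  proof -
    have "(blinfun_apply T x, blinfun_apply A x) \<in> {q. N - c * s - \<delta> \<le> norm (fst q + s *\<^sub>R snd q)}"
    proof (rule PS)
      show "closed {q::'b\<times>'b. N - c * s - \<delta> \<le> norm (fst q + s *\<^sub>R snd q)}"
        by (rule closed_Collect_le) (auto intro!: continuous_intros)
      have "N - c * s - \<delta> \<le> norm (blinfun_apply T (xs n) + s *\<^sub>R blinfun_apply A (xs n))"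
        if tn: "t n < min s (\<delta> / s)" for n
      proof -
        define u where "u = blinfun_apply T (xs n)"
        define v where "v = blinfun_apply A (xs n)"
        define r where "r = t n"
        define f0 where "f0 = norm u"
        define fr where "fr = norm (u + r *\<^sub>R v)"
        define fs where "fs = norm (u + s *\<^sub>R v)"
        have r: "0 < r" "r \<le> s" "r * s < \<delta>" using tn tpos[of n] s unfolding r_def
          by (auto simp: pos_less_divide_eq mult.commute)
        have cv: "fr \<le> (1 - r/s) * f0 + (r/s) * fs" unfolding fr_def f0_def fs_def
          by (rule convex_step[OF r(1,2)])
        have f0: "f0 \<le> N" unfolding f0_def u_def by (rule TN)
        have frl: "fr \<ge> N - c * r - r\<^sup>2" unfolding fr_def u_def v_def r_def by (rule low)
        have "s * fr \<le> (s - r) * f0 + r * fs" using cv s by (simp add: field_simps)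
        also have "(s - r) * f0 \<le> (s - r) * N" using f0 r by (intro mult_left_mono) auto
        finally have "s * fr \<le> (s - r) * N + r * fs" by simp
        moreover have "s * (N - c * r - r\<^sup>2) \<le> s * fr" using frl s by (intro mult_left_mono) auto
        ultimately have "r * (N - c * s - r * s) \<le> r * fs" by (simp add: algebra_simps power2_eq_square)
        hence "N - c * s - r * s \<le> fs" using r(1) by (simp add: mult_le_cancel_left_pos)
        thus ?thesis using r(3) unfolding fs_def u_def v_def by linarith
      qed
      moreover have "min s (\<delta> / s) > 0" using s d by simp
      ultimately show "eventually (\<lambda>n. (blinfun_apply T (xs n), blinfun_apply A (xs n))
          \<in> {q. N - c * s - \<delta> \<le> norm (fst q + s *\<^sub>R snd q)}) sequentially"
        using tev[of "min s (\<delta> / s)"] by (auto elim: eventually_mono)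
    qed
    thus ?thesis by simp
  qed
  have "norm (blinfun_apply T x + s *\<^sub>R blinfun_apply A x) \<ge> N - c * s" if s: "s > 0" for s
    using C2[OF s] by (metis diff_le_eq field_le_epsilon add.commute)
  thus ?thesis using nx1 Tx unfolding N_def by blast
qed

lemma compact_op_uminus:
  fixes A :: "'a::real_normed_vector \<Rightarrow>\<^sub>L 'b::real_normed_vector"
  assumes "compact_op A" shows "compact_op (- A)"
proof -
  have "blinfun_apply (- A) ` cball 0 1 = blinfun_apply A ` cball 0 1"
  proof (intro set_eqI iffI)
    fix y assume "y \<in> blinfun_apply (- A) ` cball 0 1"
    then obtain x where "x \<in> cball 0 1" "y = blinfun_apply (- A) x" by blast
    hence "-x \<in> cball 0 1" "y = blinfun_apply A (-x)" by (auto simp: blinfun.minus_right uminus_blinfun.rep_eq)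
    thus "y \<in> blinfun_apply A ` cball 0 1" by blast
  next
    fix y assume "y \<in> blinfun_apply A ` cball 0 1"
    then obtain x where "x \<in> cball 0 1" "y = blinfun_apply A x" by blast
    hence "-x \<in> cball 0 1" "y = blinfun_apply (- A) (-x)" by (auto simp: blinfun.minus_right uminus_blinfun.rep_eq)
    thus "y \<in> blinfun_apply (- A) ` cball 0 1" by blast
  qed
  thus ?thesis using assms unfolding compact_op_def by simp
qed

lemma strict_step:
  fixes u v :: "'v::real_normed_vector"
  assumes r: "0 < r" "r \<le> s" and nu: "norm u = N" and h: "norm (u + s *\<^sub>R v) < N - c * s"
  shows "norm (u + r *\<^sub>R v) < N - c * r"
proof -
  have s: "s > 0" using r by simp
  have "norm (u + r *\<^sub>R v) \<le> (1 - r/s) * N + (r/s) * norm (u + s *\<^sub>R v)"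
    using convex_step[OF r, of u v] nu by simp
  also have "(r/s) * norm (u + s *\<^sub>R v) < (r/s) * (N - c * s)"
    using h r s by (intro mult_strict_left_mono) auto
  also have "(1 - r/s) * N + (r/s) * (N - c * s) = N - c * r" using s by (simp add: field_simps)
  finally show ?thesis by simp
qed

lemma core:
  fixes T A :: "'a::banach \<Rightarrow>\<^sub>L 'b::real_normed_vector"
    and \<epsilon> :: real and D :: "'a set"
  assumes refl: "reflexive_space TYPE('a)"
    and e: "0 \<le> \<epsilon>"
    and cT: "compact_op T" and cA: "compact_op A"
    and Dne: "D \<noteq> {}" and Dc: "compact D" and Dconn: "connected D" and Ds: "D \<subseteq> sphere 0 1"
    and MT: "norm_att T = D \<union> uminus ` D"
    and orth: "bj_eps_orth \<epsilon> T A"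
  shows "\<exists>x \<in> norm_att T. \<forall>t::real.
           (norm (blinfun_apply T x + t *\<^sub>R blinfun_apply A x))\<^sup>2
              \<ge> (norm T)\<^sup>2 - 2 * \<epsilon> * norm T * (\<bar>t\<bar> * norm A)"
proof (cases "norm T = 0")
  case True
  obtain d where "d \<in> D" using Dne by blast
  hence "d \<in> norm_att T" using MT by blast
  thus ?thesis using True by auto
next
  case False
  define N where "N = norm T"
  have Np: "N > 0" using False N_def by simp
  define c where "c = \<epsilon> * norm A"
  have c: "c \<ge> 0" unfolding c_def using e by simp
  have orth': "(norm (T + t *\<^sub>R A))\<^sup>2 \<ge> N\<^sup>2 - 2 * N * c * \<bar>t\<bar>" for t
    using orth unfolding bj_eps_orth_def N_def c_def by (simp add: algebra_simps)
  have bdA: "norm (T + t *\<^sub>R A) \<ge> N - c * t" if "t > 0" for t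
  proof -
    have "(norm (T + t *\<^sub>R A))\<^sup>2 \<ge> N\<^sup>2 - 2 * N * c * t" if "t > 0" for t
      using orth'[of t] that by simp
    thus ?thesis unfolding N_def by (intro sq_to_lin[OF _ c _ \<open>t > 0\<close>]) (use Np N_def in auto)
  qed
  have bdmA: "norm (T + t *\<^sub>R (- A)) \<ge> N - c * t" if "t > 0" for t
  proof -
    have "(norm (T + t *\<^sub>R (- A)))\<^sup>2 \<ge> N\<^sup>2 - 2 * N * c * t" if "t > 0" for t
      using orth'[of "-t"] that by simp
    thus ?thesis unfolding N_def by (intro sq_to_lin[OF _ c _ \<open>t > 0\<close>]) (use Np N_def in auto)
  qed
  define P where "P B = {x. \<forall>s>0. N - c * s \<le> norm (blinfun_apply T x + s *\<^sub>R blinfun_apply B x)}"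
    for B :: "'a \<Rightarrow>\<^sub>L 'b"
  have Pcl: "closed (P B)" for B
  proof -
    have "P B = (\<Inter>s\<in>{0<..}. {x. N - c * s \<le> norm (blinfun_apply T x + s *\<^sub>R blinfun_apply B x)})"
      unfolding P_def by auto
    also have "closed \<dots>"
      by (intro closed_INT ballI closed_Collect_le) (auto intro!: continuous_intros)
    finally show ?thesis .
  qed
  have Psym: "- x \<in> P B \<longleftrightarrow> x \<in> P B" for x B
  proof -
    have "blinfun_apply T (-x) + s *\<^sub>R blinfun_apply B (-x) = - (blinfun_apply T x + s *\<^sub>R blinfun_apply B x)" for s
      by (simp add: blinfun.minus_right uminus_blinfun.rep_eq)
    hence "norm (blinfun_apply T (-x) + s *\<^sub>R blinfun_apply B (-x)) = norm (blinfun_apply T x + s *\<^sub>R blinfun_apply B x)" for s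
      by (metis norm_minus_cancel)
    thus ?thesis unfolding P_def by simp
  qed
  have inD: "norm (blinfun_apply T x) = N" if "x \<in> D" for x
    using that MT unfolding norm_att_def N_def by blast
  have cover: "D \<subseteq> P A \<union> P (- A)"
  proof
    fix x assume xD: "x \<in> D"
    show "x \<in> P A \<union> P (- A)"
    proof (rule ccontr)
      assume "x \<notin> P A \<union> P (- A)"
      then obtain s1 s2 where s1: "s1 > 0" "norm (blinfun_apply T x + s1 *\<^sub>R blinfun_apply A x) < N - c * s1"
        and s2: "s2 > 0" "norm (blinfun_apply T x + s2 *\<^sub>R blinfun_apply (- A) x) < N - c * s2"
        unfolding P_def by (auto simp: not_le)
      define r where "r = min s1 s2"
      have r: "r > 0" "r \<le> s1" "r \<le> s2" unfolding r_def using s1 s2 by auto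
      have a1: "norm (blinfun_apply T x + r *\<^sub>R blinfun_apply A x) < N - c * r"
        by (rule strict_step[OF r(1,2) inD[OF xD] s1(2)])
      have a2: "norm (blinfun_apply T x + r *\<^sub>R blinfun_apply (- A) x) < N - c * r"
        by (rule strict_step[OF r(1,3) inD[OF xD] s2(2)])
      have "2 * N = norm ((blinfun_apply T x + r *\<^sub>R blinfun_apply A x) + (blinfun_apply T x + r *\<^sub>R blinfun_apply (- A) x))"
        using inD[OF xD] by (simp add: blinfun.minus_left uminus_blinfun.rep_eq scaleR_2[symmetric] del: scaleR_2)
      also have "\<dots> \<le> norm (blinfun_apply T x + r *\<^sub>R blinfun_apply A x) + norm (blinfun_apply T x + r *\<^sub>R blinfun_apply (- A) x)"
        by (rule norm_triangle_ineq)
      finally show False using a1 a2 c r by (smt (verit) mult_nonneg_nonneg)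
    qed
  qed
  have ne: "P B \<inter> D \<noteq> {}" if cB: "compact_op B" and bd: "\<And>t. t > 0 \<Longrightarrow> norm (T + t *\<^sub>R B) \<ge> N - c * t" for B
  proof -
    obtain x where x: "norm x = 1" "norm (blinfun_apply T x) = norm T"
      "\<forall>s>0. norm (blinfun_apply T x + s *\<^sub>R blinfun_apply B x) \<ge> norm T - c * s"
    proof -
      have "norm T > 0" using Np N_def by simp
      moreover have "\<And>t. t > 0 \<Longrightarrow> norm (T + t *\<^sub>R B) \<ge> norm T - c * t" using bd N_def by simp
      ultimately show ?thesis using KL[OF refl cT cB _ c] that by blast
    qed
    have xP: "x \<in> P B" using x(3) unfolding P_def N_def by auto
    have "x \<in> norm_att T" unfolding norm_att_def using x by simp
    hence "x \<in> D \<or> -x \<in> D" using MT by auto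
    thus ?thesis using xP Psym by (metis IntI empty_iff minus_minus)
  qed
  have neA: "P A \<inter> D \<noteq> {}" by (rule ne[OF cA bdA])
  have nemA: "P (- A) \<inter> D \<noteq> {}" by (rule ne[OF compact_op_uminus[OF cA] bdmA])
  have "P A \<inter> P (- A) \<inter> D \<noteq> {}"
    using Dconn[unfolded connected_closed] Pcl cover neA nemA by blast
  then obtain x where xD: "x \<in> D" and xA: "x \<in> P A" and xmA: "x \<in> P (- A)" by blast
  have Tx: "norm (blinfun_apply T x) = N" by (rule inD[OF xD])
  have lin: "norm (blinfun_apply T x + t *\<^sub>R blinfun_apply A x) \<ge> N - c * \<bar>t\<bar>" for t
  proof -
    consider "t = 0" | "t > 0" | "t < 0" by linarith
    thus ?thesis
    proof cases
      case 1 thus ?thesis using Tx by simp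
    next
      case 2 thus ?thesis using xA unfolding P_def by auto
    next
      case 3
      have h: "\<forall>s>0. N - c * s \<le> norm (blinfun_apply T x + s *\<^sub>R blinfun_apply (- A) x)"
        using xmA unfolding P_def by simp
      have "N - c * (-t) \<le> norm (blinfun_apply T x + (-t) *\<^sub>R blinfun_apply (- A) x)"
        using spec[OF h, of "-t"] 3 by linarith
      moreover have "blinfun_apply T x + (-t) *\<^sub>R blinfun_apply (- A) x = blinfun_apply T x + t *\<^sub>R blinfun_apply A x"
        by (simp add: uminus_blinfun.rep_eq)
      ultimately have "N - c * (-t) \<le> norm (blinfun_apply T x + t *\<^sub>R blinfun_apply A x)" by metis
      moreover have "\<bar>t\<bar> = -t" using 3 by simp
      ultimately show ?thesis by simp
    qed
  qed
  have "(norm (blinfun_apply T x + t *\<^sub>R blinfun_apply A x))\<^sup>2 \<ge> N\<^sup>2 - 2 * N * (c * \<bar>t\<bar>)" for t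
  proof -
    define a where "a = norm (blinfun_apply T x + t *\<^sub>R blinfun_apply A x)"
    define b where "b = c * \<bar>t\<bar>"
    have a: "a \<ge> N - b" "a \<ge> 0" using lin[of t] unfolding a_def b_def by auto
    have b: "b \<ge> 0" unfolding b_def using c by simp
    have "a\<^sup>2 \<ge> N\<^sup>2 - 2 * N * b"
    proof (cases "N - b \<ge> 0")
      case True
      hence "(N - b)\<^sup>2 \<le> a\<^sup>2" using a by (intro power_mono) auto
      moreover have "(N - b)\<^sup>2 = N\<^sup>2 - 2 * N * b + b\<^sup>2" by (simp add: power2_eq_square algebra_simps)
      moreover have "b\<^sup>2 \<ge> 0" by simp
      ultimately show ?thesis by linarith
    next
      case False
      hence "N * (N - 2 * b) \<le> 0" using Np b by (intro mult_nonneg_nonpos) auto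
      moreover have "N\<^sup>2 - 2 * N * b = N * (N - 2 * b)" by (simp add: power2_eq_square algebra_simps)
      moreover have "a\<^sup>2 \<ge> 0" by simp
      ultimately show ?thesis by linarith
    qed
    thus ?thesis unfolding a_def b_def .
  qed
  moreover have "2 * N * (c * \<bar>t\<bar>) = 2 * \<epsilon> * norm T * (\<bar>t\<bar> * norm A)" for t
    unfolding c_def N_def by (simp add: algebra_simps)
  ultimately have "\<forall>t. (norm (blinfun_apply T x + t *\<^sub>R blinfun_apply A x))\<^sup>2
              \<ge> (norm T)\<^sup>2 - 2 * \<epsilon> * norm T * (\<bar>t\<bar> * norm A)" unfolding N_def by simp
  moreover have "x \<in> norm_att T" using xD MT by blast
  ultimately show ?thesis by blast
qed

lemma back1:
  fixes T A :: "'a::real_normed_vector \<Rightarrow>\<^sub>L 'b::real_normed_vector"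
  assumes x: "x \<in> norm_att T"
    and h: "\<forall>t::real. (norm (blinfun_apply T x + t *\<^sub>R blinfun_apply A x))\<^sup>2
                 \<ge> (norm T)\<^sup>2 - 2 * \<epsilon> * norm T * norm (t *\<^sub>R A)"
  shows "bj_eps_orth \<epsilon> T A"
  unfolding bj_eps_orth_def
proof
  fix t :: real
  have nx: "norm x = 1" using x unfolding norm_att_def by simp
  have "norm (blinfun_apply T x + t *\<^sub>R blinfun_apply A x) = norm (blinfun_apply (T + t *\<^sub>R A) x)"
    by (simp add: blinfun.add_left blinfun.scaleR_left)
  also have "\<dots> \<le> norm (T + t *\<^sub>R A) * norm x" by (rule norm_blinfun)
  finally have "norm (blinfun_apply T x + t *\<^sub>R blinfun_apply A x) \<le> norm (T + t *\<^sub>R A)" using nx by simp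
  hence "(norm (blinfun_apply T x + t *\<^sub>R blinfun_apply A x))\<^sup>2 \<le> (norm (T + t *\<^sub>R A))\<^sup>2"
    by (intro power_mono) auto
  thus "(norm T)\<^sup>2 - 2 * \<epsilon> * norm T * norm (t *\<^sub>R A) \<le> (norm (T + t *\<^sub>R A))\<^sup>2"
    using h[rule_format, of t] by linarith
qed

theorem mainTheorem6:
  fixes T A :: "'a::banach \<Rightarrow>\<^sub>L 'b::real_normed_vector"
    and \<epsilon> :: real and D :: "'a set"
  assumes "reflexive_space TYPE('a)"
    and "0 \<le> \<epsilon>" and "\<epsilon> < 1"
    and "compact_op T" and "compact_op A"
    and "D \<noteq> {}" and "compact D" and "connected D" and "D \<subseteq> sphere 0 1"
    and "norm_att T = D \<union> uminus ` D"
  shows "(bj_eps_orth \<epsilon> T A \<longleftrightarrow>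
            (\<exists>x \<in> norm_att T. \<forall>t::real.
               (norm (blinfun_apply T x + t *\<^sub>R blinfun_apply A x))\<^sup>2
                 \<ge> (norm T)\<^sup>2 - 2 * \<epsilon> * norm T * norm (t *\<^sub>R A)))
       \<and> (norm_att T \<subseteq> norm_att A \<longrightarrow>
            (bj_eps_orth \<epsilon> T A \<longleftrightarrow>
              (\<exists>x \<in> norm_att T. bj_eps_orth \<epsilon> (blinfun_apply T x) (blinfun_apply A x))))"
proof -
  have fwd: "\<exists>x \<in> norm_att T. \<forall>t::real.
               (norm (blinfun_apply T x + t *\<^sub>R blinfun_apply A x))\<^sup>2
                 \<ge> (norm T)\<^sup>2 - 2 * \<epsilon> * norm T * (\<bar>t\<bar> * norm A)"
    if o: "bj_eps_orth \<epsilon> T A"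
    by (rule core[OF assms(1,2,4-10) o])
  have P1: "bj_eps_orth \<epsilon> T A \<longleftrightarrow>
            (\<exists>x \<in> norm_att T. \<forall>t::real.
               (norm (blinfun_apply T x + t *\<^sub>R blinfun_apply A x))\<^sup>2
                 \<ge> (norm T)\<^sup>2 - 2 * \<epsilon> * norm T * norm (t *\<^sub>R A))"
    using fwd back1 by (auto simp: norm_scaleR)
  have P2: "bj_eps_orth \<epsilon> T A \<longleftrightarrow>
              (\<exists>x \<in> norm_att T. bj_eps_orth \<epsilon> (blinfun_apply T x) (blinfun_apply A x))"
    if sub: "norm_att T \<subseteq> norm_att A"
  proof
    assume o: "bj_eps_orth \<epsilon> T A"
    then obtain x where x: "x \<in> norm_att T" and h: "\<forall>t::real.
               (norm (blinfun_apply T x + t *\<^sub>R blinfun_apply A x))\<^sup>2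
                 \<ge> (norm T)\<^sup>2 - 2 * \<epsilon> * norm T * (\<bar>t\<bar> * norm A)" using fwd by blast
    have Tx: "norm (blinfun_apply T x) = norm T" using x unfolding norm_att_def by simp
    have Ax: "norm (blinfun_apply A x) = norm A" using x sub unfolding norm_att_def by auto
    have "bj_eps_orth \<epsilon> (blinfun_apply T x) (blinfun_apply A x)"
      unfolding bj_eps_orth_def using h Tx Ax by (simp add: mult.assoc)
    thus "\<exists>x \<in> norm_att T. bj_eps_orth \<epsilon> (blinfun_apply T x) (blinfun_apply A x)" using x by blast
  next
    assume "\<exists>x \<in> norm_att T. bj_eps_orth \<epsilon> (blinfun_apply T x) (blinfun_apply A x)"
    then obtain x where x: "x \<in> norm_att T" and b: "bj_eps_orth \<epsilon> (blinfun_apply T x) (blinfun_apply A x)" by blast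
    have Tx: "norm (blinfun_apply T x) = norm T" and nx: "norm x = 1" using x unfolding norm_att_def by auto
    have "\<forall>t::real. (norm (blinfun_apply T x + t *\<^sub>R blinfun_apply A x))\<^sup>2
                 \<ge> (norm T)\<^sup>2 - 2 * \<epsilon> * norm T * norm (t *\<^sub>R A)"
    proof
      fix t :: real
      have Ax: "norm (blinfun_apply A x) \<le> norm A" using norm_blinfun[of A x] nx by simp
      have "norm (t *\<^sub>R blinfun_apply A x) \<le> norm (t *\<^sub>R A)" using Ax by (simp add: mult_left_mono)
      hence "2 * \<epsilon> * norm T * norm (t *\<^sub>R blinfun_apply A x) \<le> 2 * \<epsilon> * norm T * norm (t *\<^sub>R A)"
        using assms(2) by (intro mult_left_mono) auto
      moreover have "(norm (blinfun_apply T x + t *\<^sub>R blinfun_apply A x))\<^sup>2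
          \<ge> (norm T)\<^sup>2 - 2 * \<epsilon> * norm T * norm (t *\<^sub>R blinfun_apply A x)"
        using b Tx unfolding bj_eps_orth_def by metis
      ultimately show "(norm (blinfun_apply T x + t *\<^sub>R blinfun_apply A x))\<^sup>2
                 \<ge> (norm T)\<^sup>2 - 2 * \<epsilon> * norm T * norm (t *\<^sub>R A)" by linarith
    qed
    thus "bj_eps_orth \<epsilon> T A" by (rule back1[OF x])
  qed
  show ?thesis using P1 P2 by blast
qed

end
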